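(* Consider an AoI SHS as in the context with matrices $\mathbf{D}$ and $\mathbf{R}$ as defined there, and let $\bar{\mathbf{v}}^{0}=[\bar{\mathbf{v}}^{0}_{0}\ \cdots\ \bar{\mathbf{v}}^{0}_{q_{\max}}]$ be the stationary (duplicated) state-probability row vector. If $\bar{\mathbf{v}}^{0}>\mathbf{0}$ (componentwise) and there exists a non-negative row vector $\bar{\mathbf{v}}^{1}\in\mathbb{R}^{n|\mathcal{Q}|}$ solving $\bar{\mathbf{v}}^{1}\mathbf{D}=\bar{\mathbf{v}}^{0}+\bar{\mathbf{v}}^{1}\mathbf{R}$, then all eigenvalues of $\mathbf{R}-\mathbf{D}$ have strictly negative real parts.
   Context: An AoI SHS: discrete state $q(t)\in\mathcal{Q}=\{0,\ldots,q_{\max}\}$ is a finite-state continuous-time Markov chain with transitions $l\in\mathcal{L}$ from $q_l$ to $q'_l$ at fixed rates $\lambda^{(l)}>0$ (self-transitions and parallel transitions allowed); the continuous state $\mathbf{x}(t)\in\mathbb{R}^n$ grows at unit rate in each component between transitions and is reset to $\mathbf{x}\mathbf{A}_l$ at transition $l$, where $\mathbf{A}_l$ is an $n\times n$ binary matrix with at most one $1$ per column. Let $d_{\bar q}=\sum_{l:q_l=\bar q}\lambda^{(l)}$, $\mathbf{D}=\mathrm{diag}(d_0\mathbf{I}_n,\ldots,d_{q_{\max}}\mathbf{I}_n)$ (an $n|\mathcal{Q}|\times n|\mathcal{Q}|$ matrix), and let $\mathbf{R}$ be the block matrix with $n\times n$ blocks $\mathbf{R}_{i,j}=\sum_{l\in\mathcal{L}_{i,j}}\lambda^{(l)}\mathbf{A}_l$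 for $i,j\in\mathcal{Q}$, where $\mathcal{L}_{i,j}=\{l: q_l=i,q'_l=j\}$. The vector $\bar{\mathbf{v}}^{0}_{\bar q}=[1\ \cdots\ 1]\pi_{\bar q}\in\mathbb{R}^n$, where $\pi$ is a stationary distribution of $q(t)$. *)

theory Defs
  imports "Jordan_Normal_Form.Char_Poly"
begin

text \<open>An AoI SHS with discrete states {0..qmax}, continuous state dimension n,
  transitions indexed by a finite set L; transition l goes from src l to dst l
  at rate lam l and resets x to x A_l.  Block matrices of size n(qmax+1) are
  indexed by q*n+i (block q, component i < n).\<close>

definition aoi_shs :: "nat \<Rightarrow> nat \<Rightarrow> 'l set \<Rightarrow> ('l \<Rightarrow> nat) \<Rightarrow> ('l \<Rightarrow> nat)
    \<Rightarrow> ('l \<Rightarrow> real) \<Rightarrow> ('l \<Rightarrow> real mat) \<Rightarrow> bool" where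
  "aoi_shs n qmax L src dst lam A \<longleftrightarrow> finite L \<and>
     (\<forall>l\<in>L. src l \<le> qmax \<and> dst l \<le> qmax \<and> lam l > 0 \<and> A l \<in> carrier_mat n n \<and>
        (\<forall>i<n. \<forall>j<n. A l $$ (i, j) = 0 \<or> A l $$ (i, j) = 1) \<and>
        (\<forall>j<n. card {i. i < n \<and> A l $$ (i, j) = 1} \<le> 1))"

text \<open>Total exit rate d_q (including self-transitions).\<close>
definition exit_rate :: "'l set \<Rightarrow> ('l \<Rightarrow> nat) \<Rightarrow> ('l \<Rightarrow> real) \<Rightarrow> nat \<Rightarrow> real" where
  "exit_rate L src lam q = (\<Sum>l\<in>{l\<in>L. src l = q}. lam l)"

definition generator :: "'l set \<Rightarrow> ('l \<Rightarrow> nat) \<Rightarrow> ('l \<Rightarrow> nat) \<Rightarrow> ('l \<Rightarrow> real)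
    \<Rightarrow> nat \<Rightarrow> nat \<Rightarrow> real" where
  "generator L src dst lam i j =
     (if i = j then - (\<Sum>l\<in>{l\<in>L. src l = i \<and> dst l \<noteq> i}. lam l)
      else (\<Sum>l\<in>{l\<in>L. src l = i \<and> dst l = j}. lam l))"

definition stationary_dist :: "nat \<Rightarrow> 'l set \<Rightarrow> ('l \<Rightarrow> nat) \<Rightarrow> ('l \<Rightarrow> nat)
    \<Rightarrow> ('l \<Rightarrow> real) \<Rightarrow> (nat \<Rightarrow> real) \<Rightarrow> bool" where
  "stationary_dist qmax L src dst lam \<pi> \<longleftrightarrow>
     (\<forall>q\<le>qmax. \<pi> q \<ge> 0) \<and> (\<Sum>q\<le>qmax. \<pi> q) = 1 \<and>
     (\<forall>j\<le>qmax. (\<Sum>i\<le>qmax. \<pi> i * generator L src dst lam i j) = 0)"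

definition D_mat :: "nat \<Rightarrow> nat \<Rightarrow> 'l set \<Rightarrow> ('l \<Rightarrow> nat) \<Rightarrow> ('l \<Rightarrow> real) \<Rightarrow> real mat" where
  "D_mat n qmax L src lam = mat (n * (qmax + 1)) (n * (qmax + 1))
     (\<lambda>(r, c). if r = c then exit_rate L src lam (r div n) else 0)"

definition R_mat :: "nat \<Rightarrow> nat \<Rightarrow> 'l set \<Rightarrow> ('l \<Rightarrow> nat) \<Rightarrow> ('l \<Rightarrow> nat)
    \<Rightarrow> ('l \<Rightarrow> real) \<Rightarrow> ('l \<Rightarrow> real mat) \<Rightarrow> real mat" where
  "R_mat n qmax L src dst lam A = mat (n * (qmax + 1)) (n * (qmax + 1))
     (\<lambda>(r, c). \<Sum>l\<in>{l\<in>L. src l = r div n \<and> dst l = c div n}. lam l * A l $$ (r mod n, c mod n))"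

definition v0_vec :: "nat \<Rightarrow> nat \<Rightarrow> (nat \<Rightarrow> real) \<Rightarrow> real vec" where
  "v0_vec n qmax \<pi> = vec (n * (qmax + 1)) (\<lambda>k. \<pi> (k div n))"

end

theory Submission
  imports Defs
begin


lemma row_ineq:
  fixes M :: "real mat" and x :: "complex vec" and k :: complex
  assumes M: "M \<in> carrier_mat N N" and off: "\<And>i j. i < N \<Longrightarrow> j < N \<Longrightarrow> i \<noteq> j \<Longrightarrow> M $$ (i,j) \<ge> 0"
    and i: "i < N"
    and eq: "(\<Sum>j<N. complex_of_real (M $$ (i,j)) * x $ j) = k * x $ i"
  shows "cmod (k - M $$ (i,i)) * cmod (x $ i) + M $$ (i,i) * cmod (x $ i)
      \<le> (\<Sum>j<N. M $$ (i,j) * cmod (x $ j))"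
proof -
  have s1: "(\<Sum>j<N. complex_of_real (M $$ (i,j)) * x $ j) = of_real (M $$ (i,i)) * x $ i
     + (\<Sum>j\<in>{..<N}-{i}. complex_of_real (M $$ (i,j)) * x $ j)"
    using i by (simp add: sum.remove)
  have s2: "(\<Sum>j<N. M $$ (i,j) * cmod (x $ j)) = M $$ (i,i) * cmod (x $ i)
     + (\<Sum>j\<in>{..<N}-{i}. M $$ (i,j) * cmod (x $ j))"
    using i by (simp add: sum.remove)
  have "(k - M $$ (i,i)) * x $ i = (\<Sum>j\<in>{..<N}-{i}. complex_of_real (M $$ (i,j)) * x $ j)"
    using eq s1 by (simp add: algebra_simps)
  hence "cmod ((k - M $$ (i,i)) * x $ i) \<le> (\<Sum>j\<in>{..<N}-{i}. cmod (complex_of_real (M $$ (i,j)) * x $ j))"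
    by (metis norm_sum)
  also have "\<dots> = (\<Sum>j\<in>{..<N}-{i}. M $$ (i,j) * cmod (x $ j))"
    by (rule sum.cong) (use off i in \<open>auto simp: norm_mult\<close>)
  finally show ?thesis using s2 by (simp add: norm_mult)
qed

lemma key:
  fixes M :: "real mat"
  assumes M: "M \<in> carrier_mat N N" and off: "\<And>i j. i < N \<Longrightarrow> j < N \<Longrightarrow> i \<noteq> j \<Longrightarrow> M $$ (i,j) \<ge> 0"
    and w: "\<And>i. i < N \<Longrightarrow> w i \<ge> 0" and u: "\<And>i. i < N \<Longrightarrow> u i > 0"
    and col: "\<And>j. j < N \<Longrightarrow> (\<Sum>i<N. w i * M $$ (i,j)) = - u j"
    and ev: "eigenvalue (map_mat complex_of_real M) k"
  shows "Re k < 0"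
proof (rule ccontr)
  assume "\<not> Re k < 0"
  hence rk: "Re k \<ge> 0" by simp
  from ev obtain x where x: "x \<in> carrier_vec N" "x \<noteq> 0\<^sub>v N"
    and mx: "map_mat complex_of_real M *\<^sub>v x = k \<cdot>\<^sub>v x"
    using M unfolding eigenvalue_def eigenvector_def by auto
  have eq: "(\<Sum>j<N. complex_of_real (M $$ (i,j)) * x $ j) = k * x $ i" if i: "i < N" for i
  proof -
    have "(map_mat complex_of_real M *\<^sub>v x) $ i = k * x $ i" using mx i x by simp
    moreover have "(map_mat complex_of_real M *\<^sub>v x) $ i = (\<Sum>j<N. complex_of_real (M $$ (i,j)) * x $ j)"
      using i x M by (simp add: scalar_prod_def row_def atLeast0LessThan)
    ultimately show ?thesis by simp
  qed
  obtain j0 where j0: "j0 < N" "x $ j0 \<noteq> 0"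
    using x by (metis eq_vecI carrier_vecD index_zero_vec)
  have nn: "cmod (k - M $$ (i,i)) + M $$ (i,i) \<ge> 0" for i
  proof -
    have "Re (k - M $$ (i,i)) \<le> cmod (k - M $$ (i,i))" by (rule complex_Re_le_cmod)
    thus ?thesis using rk by simp
  qed
  have "0 \<le> (\<Sum>i<N. w i * (cmod (x $ i) * (cmod (k - M $$ (i,i)) + M $$ (i,i))))"
    using w nn by (intro sum_nonneg) auto
  also have "\<dots> \<le> (\<Sum>i<N. w i * (\<Sum>j<N. M $$ (i,j) * cmod (x $ j)))"
    apply (rule sum_mono)
    apply (rule mult_left_mono)
    using row_ineq[OF M off _ eq] w by (auto simp: algebra_simps)
  also have "\<dots> = (\<Sum>j<N. cmod (x $ j) * (\<Sum>i<N. w i * M $$ (i,j)))"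
  proof -
    have "(\<Sum>i<N. w i * (\<Sum>j<N. M $$ (i,j) * cmod (x $ j))) = (\<Sum>i<N. \<Sum>j<N. w i * M $$ (i,j) * cmod (x $ j))"
      by (simp add: sum_distrib_left mult.assoc)
    also have "\<dots> = (\<Sum>j<N. \<Sum>i<N. w i * M $$ (i,j) * cmod (x $ j))"
      by (rule sum.swap)
    also have "\<dots> = (\<Sum>j<N. cmod (x $ j) * (\<Sum>i<N. w i * M $$ (i,j)))"
      by (simp add: sum_distrib_left mult_ac)
    finally show ?thesis .
  qed
  also have "\<dots> = - (\<Sum>j<N. u j * cmod (x $ j))"
    using col by (simp add: sum_negf[symmetric] mult_ac)
  also have "\<dots> < 0"
  proof -
    have "0 < (\<Sum>j\<in>{j0}. u j * cmod (x $ j))" using j0 u by simp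
    also have "\<dots> \<le> (\<Sum>j<N. u j * cmod (x $ j))"
    proof (rule sum_mono2)
      show "\<And>b. b \<in> {..<N} - {j0} \<Longrightarrow> 0 \<le> u b * cmod (x $ b)"
        using u by (simp add: less_imp_le)
    qed (use j0 in auto)
    finally show ?thesis by simp
  qed
  finally show False by simp
qed



theorem lemma2:
  fixes n qmax :: nat and L :: "'l set" and src dst :: "'l \<Rightarrow> nat"
    and lam :: "'l \<Rightarrow> real" and A :: "'l \<Rightarrow> real mat" and \<pi> :: "nat \<Rightarrow> real"
  assumes shs: "aoi_shs n qmax L src dst lam A"
    and stat: "stationary_dist qmax L src dst lam \<pi>"
    and v0_pos: "\<forall>k < n * (qmax + 1). v0_vec n qmax \<pi> $ k > 0"
    and v1: "v1 \<in> carrier_vec (n * (qmax + 1))"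
    and v1_nonneg: "\<forall>k < n * (qmax + 1). v1 $ k \<ge> 0"
    and v1_eq: "transpose_mat (D_mat n qmax L src lam) *\<^sub>v v1
                = v0_vec n qmax \<pi> + transpose_mat (R_mat n qmax L src dst lam A) *\<^sub>v v1"
  shows "\<forall>k. eigenvalue (map_mat complex_of_real
             (R_mat n qmax L src dst lam A - D_mat n qmax L src lam)) k \<longrightarrow> Re k < 0"
  proof (intro allI impI)
  fix k
  assume ev: "eigenvalue (map_mat complex_of_real
             (R_mat n qmax L src dst lam A - D_mat n qmax L src lam)) k"
  define N where "N = n * (qmax + 1)"
  define R where "R = R_mat n qmax L src dst lam A"
  define D where "D = D_mat n qmax L src lam"
  have R: "R \<in> carrier_mat N N" unfolding R_def R_mat_def N_def by simp
  have D: "D \<in> carrier_mat N N" unfolding D_def D_mat_def N_def by simp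
  have M: "R - D \<in> carrier_mat N N" using R D by (simp add: minus_carrier_mat)
  have off: "(R - D) $$ (i,j) \<ge> 0" if ij: "i < N" "j < N" "i \<noteq> j" for i j
  proof -
    have np: "n > 0" using ij N_def by (cases n) auto
    have "(R - D) $$ (i,j) = R $$ (i,j) - D $$ (i,j)" using R D ij by simp
    also have "D $$ (i,j) = 0" using ij unfolding D_def D_mat_def N_def by simp
    also have "R $$ (i,j) = (\<Sum>l\<in>{l\<in>L. src l = i div n \<and> dst l = j div n}. lam l * A l $$ (i mod n, j mod n))"
      using ij unfolding R_def R_mat_def N_def by simp
    finally have e: "(R - D) $$ (i,j) = (\<Sum>l\<in>{l\<in>L. src l = i div n \<and> dst l = j div n}. lam l * A l $$ (i mod n, j mod n))" by simp
    have "0 \<le> (\<Sum>l\<in>{l\<in>L. src l = i div n \<and> dst l = j div n}. lam l * A l $$ (i mod n, j mod n))"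
    proof (rule sum_nonneg)
      fix l assume l: "l \<in> {l\<in>L. src l = i div n \<and> dst l = j div n}"
      have "lam l > 0" "A l $$ (i mod n, j mod n) = 0 \<or> A l $$ (i mod n, j mod n) = 1"
        using shs l np unfolding aoi_shs_def by auto
      thus "0 \<le> lam l * A l $$ (i mod n, j mod n)" by auto
    qed
    thus ?thesis using e by simp
  qed
  have col: "(\<Sum>i<N. v1 $ i * (R - D) $$ (i,j)) = - v0_vec n qmax \<pi> $ j" if j: "j < N" for j
  proof -
    have "(transpose_mat D *\<^sub>v v1) $ j = (v0_vec n qmax \<pi> + transpose_mat R *\<^sub>v v1) $ j"
      using v1_eq unfolding D_def R_def by simp
    moreover have "(transpose_mat D *\<^sub>v v1) $ j = (\<Sum>i<N. v1 $ i * D $$ (i,j))"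
      using j D v1 unfolding N_def[symmetric] by (simp add: scalar_prod_def atLeast0LessThan mult.commute)
    moreover have "(v0_vec n qmax \<pi> + transpose_mat R *\<^sub>v v1) $ j = v0_vec n qmax \<pi> $ j + (\<Sum>i<N. v1 $ i * R $$ (i,j))"
      using j R v1 unfolding N_def[symmetric] by (simp add: scalar_prod_def atLeast0LessThan mult.commute v0_vec_def N_def)
    moreover have "(\<Sum>i<N. v1 $ i * (R - D) $$ (i,j)) = (\<Sum>i<N. v1 $ i * R $$ (i,j)) - (\<Sum>i<N. v1 $ i * D $$ (i,j))"
      using j R D by (simp add: sum_subtractf[symmetric] algebra_simps)
    ultimately show ?thesis by simp
  qed
  show "Re k < 0"
    by (rule key[OF M off _ _ col]) (use v1_nonneg v0_pos ev in \<open>auto simp: N_def R_def D_def\<close>)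
qed

end
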